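(* Let $R$ be a multirectangle in $\mathbb{R}^d$. For each $1\le i\le d$ let $F_i\subseteq(0,\infty)$ be a $\mathbb{Q}$-linearly independent set. Let $\mathcal{P}$ and $\mathcal{P}'$ be two finite partitions of $R$ into rectangles such that $\lambda(\operatorname{pr}_i(K))\in F_i$ for every $K\in\mathcal{P}\cup\mathcal{P}'$ and every $i$. Then there exists a bijection $\delta:\mathcal{P}\to\mathcal{P}'$ such that for every $K\in\mathcal{P}$ the rectangle $\delta(K)$ is a translate of $K$; moreover $\delta$ can be chosen with $\delta(K)=K$ for every $K\in\mathcal{P}\cap\mathcal{P}'$.
   Context: A rectangle in $\mathbb{R}^d$ is a set $\prod_{i=1}^d[a_i,b_i)$ with $a_i<b_i$ real; a multirectangle is a finite union of rectangles. $\operatorname{pr}_i$ is the projection onto the $i$-th coordinate and $\lambda$ is Lebesgue measure on $\mathbb{R}$. *)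

theory Defs
  imports "HOL-Analysis.Analysis"
begin

text \<open>Points of R^d are vectors real^'n, with d = CARD('n).
  A rectangle is a product of half-open intervals [a_i, b_i) with a_i < b_i.\<close>

definition rect :: "real^'n \<Rightarrow> real^'n \<Rightarrow> (real^'n) set" where
  "rect a b = {x. \<forall>i. a$i \<le> x$i \<and> x$i < b$i}"

definition is_rectangle :: "(real^'n) set \<Rightarrow> bool" where
  "is_rectangle K \<longleftrightarrow> (\<exists>a b. (\<forall>i. a$i < b$i) \<and> K = rect a b)"

definition is_multirectangle :: "(real^'n) set \<Rightarrow> bool" where
  "is_multirectangle R \<longleftrightarrow> (\<exists>\<R>. finite \<R> \<and> (\<forall>K\<in>\<R>. is_rectangle K) \<and> R = \<Union>\<R>)"

definition pr :: "'n \<Rightarrow> (real^'n) set \<Rightarrow> real set" where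
  "pr i K = (\<lambda>x. x$i) ` K"

definition rect_partition :: "(real^'n) set set \<Rightarrow> (real^'n) set \<Rightarrow> bool" where
  "rect_partition P R \<longleftrightarrow> finite P \<and> (\<forall>K\<in>P. is_rectangle K) \<and> \<Union>P = R \<and>
     (\<forall>K\<in>P. \<forall>L\<in>P. K \<noteq> L \<longrightarrow> K \<inter> L = {})"

definition rat_lin_indep :: "real set \<Rightarrow> bool" where
  "rat_lin_indep F \<longleftrightarrow> (\<forall>S c. finite S \<and> S \<subseteq> F \<and> (\<forall>s\<in>S. c s \<in> \<rat>) \<and>
     (\<Sum>s\<in>S. c s * s) = 0 \<longrightarrow> (\<forall>s\<in>S. c s = 0))"

end

theory Submission imports Defs begin

definition nxt :: "real set \<Rightarrow> real \<Rightarrow> real" where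
  "nxt T t = Min {u\<in>T. t < u}"

lemma telescope:
  fixes \<phi> :: "real \<Rightarrow> real"
  assumes add: "\<And>x y. \<phi> (x+y) = \<phi> x + \<phi> y"
    and fin: "finite T" and aT: "a \<in> T"
  shows "b \<in> T \<Longrightarrow> a \<le> b \<Longrightarrow> \<phi> (b - a) = (\<Sum>t\<in>{t\<in>T. a \<le> t \<and> t < b}. \<phi> (nxt T t - t))"
proof (induction "card {t\<in>T. a \<le> t \<and> t < b}" arbitrary: b rule: less_induct)
  case less
  have phi0: "\<phi> 0 = 0" using add[of 0 0] by simp
  let ?S = "{t\<in>T. a \<le> t \<and> t < b}"
  have finS: "finite ?S" using fin by auto
  show ?case
  proof (cases "a = b")
    case True
    then have "?S = {}" by auto
    show ?thesis unfolding \<open>?S = {}\<close> using phi0 True by simp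
  next
    case False
    then have ab: "a < b" using less by simp
    then have neS: "?S \<noteq> {}" using aT by auto
    define t0 where "t0 = Max ?S"
    have t0S: "t0 \<in> ?S" unfolding t0_def using finS neS by (rule Max_in)
    have t0max: "\<And>t. t \<in> ?S \<Longrightarrow> t \<le> t0" unfolding t0_def using finS by simp
    have S0: "{t\<in>T. a \<le> t \<and> t < t0} = ?S - {t0}" using t0S t0max by force
    have nx: "nxt T t0 = b"
    proof -
      have fin2: "finite {u\<in>T. t0 < u}" using fin by auto
      have "b \<in> {u\<in>T. t0 < u}" using t0S less by auto
      moreover have "\<forall>u\<in>{u\<in>T. t0 < u}. b \<le> u"
      proof
        fix u assume u: "u \<in> {u\<in>T. t0 < u}"
        show "b \<le> u"
        proof (rule ccontr)
          assume "\<not> b \<le> u"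
          then have "u \<in> ?S" using u t0S by auto
          then show False using t0max u by force
        qed
      qed
      ultimately show ?thesis unfolding nxt_def
        by (metis (no_types, lifting) Min_eqI fin2)
    qed
    have card_lt: "card {t\<in>T. a \<le> t \<and> t < t0} < card ?S"
      unfolding S0 using finS t0S by (meson card_Diff1_less)
    have IH: "\<phi> (t0 - a) = (\<Sum>t\<in>{t\<in>T. a \<le> t \<and> t < t0}. \<phi> (nxt T t - t))"
      using less(1)[OF card_lt] t0S by auto
    have "(\<Sum>t\<in>?S. \<phi> (nxt T t - t)) = \<phi> (nxt T t0 - t0) + (\<Sum>t\<in>?S - {t0}. \<phi> (nxt T t - t))"
      using finS t0S by (simp add: sum.remove)
    also have "\<dots> = \<phi> (b - t0) + \<phi> (t0 - a)" using IH S0 nx by simp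
    also have "\<dots> = \<phi> (b - a)" using add[of "b - t0" "t0 - a"] by simp
    finally show ?thesis by simp
  qed
qed

lemma pr_rect:
  assumes "\<forall>j. a$j < b$j"
  shows "pr i (rect a b) = {a$i..<b$i}"
proof
  show "pr i (rect a b) \<subseteq> {a$i..<b$i}" unfolding pr_def rect_def by auto
  show "{a$i..<b$i} \<subseteq> pr i (rect a b)"
  proof
    fix t assume t: "t \<in> {a$i..<b$i}"
    define x where "x = (\<chi> j. if j = i then t else a$j)"
    have "x \<in> rect a b" using t assms unfolding rect_def x_def by auto
    moreover have "x$i = t" unfolding x_def by simp
    ultimately show "t \<in> pr i (rect a b)" unfolding pr_def by force
  qed
qed

lemma measure_pr_rect:
  assumes "\<forall>j. a$j < b$j"
  shows "measure lborel (pr i (rect a b)) = b$i - a$i"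
  using pr_rect[OF assms] assms by (simp add: less_imp_le)

lemma finite_grid:
  assumes "\<And>i. finite (T i)"
  shows "finite {c::real^'n. \<forall>i. c$i \<in> T i}"
proof -
  have "{c::real^'n. \<forall>i. c$i \<in> T i} \<subseteq> vec_lambda ` (PiE UNIV T)"
  proof
    fix c :: "real^'n" assume "c \<in> {c. \<forall>i. c$i \<in> T i}"
    then have "vec_nth c \<in> PiE UNIV T" by auto
    then show "c \<in> vec_lambda ` (PiE UNIV T)" by (metis image_eqI vec_nth_inverse)
  qed
  moreover have "finite (PiE UNIV T)" using assms by (simp add: finite_PiE)
  ultimately show ?thesis by (meson finite_imageI finite_subset)
qed

lemma rect_cells:
  fixes \<phi> :: "'n::finite \<Rightarrow> real \<Rightarrow> real"
  assumes add: "\<And>i x y. \<phi> i (x+y) = \<phi> i x + \<phi> i y"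
    and fin: "\<And>i. finite (T i)"
    and ab: "\<forall>i. a$i < b$i" and aT: "\<And>i. a$i \<in> T i" and bT: "\<And>i. b$i \<in> T i"
  shows "(\<Prod>i\<in>UNIV. \<phi> i (b$i - a$i)) =
    (\<Sum>c\<in>{c. \<forall>i. c$i \<in> T i} \<inter> rect a b. \<Prod>i\<in>UNIV. \<phi> i (nxt (T i) (c$i) - c$i))"
proof -
  let ?B = "\<lambda>i. {t\<in>T i. a$i \<le> t \<and> t < b$i}"
  have "(\<Prod>i\<in>UNIV. \<phi> i (b$i - a$i)) = (\<Prod>i\<in>UNIV. \<Sum>t\<in>?B i. \<phi> i (nxt (T i) t - t))"
  proof (rule prod.cong)
    fix i :: 'n
    show "\<phi> i (b$i - a$i) = (\<Sum>t\<in>?B i. \<phi> i (nxt (T i) t - t))"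
      using telescope[of "\<phi> i", OF add fin aT bT] ab by (simp add: less_imp_le)
  qed simp
  also have "\<dots> = (\<Sum>g\<in>PiE UNIV ?B. \<Prod>i\<in>UNIV. \<phi> i (nxt (T i) (g i) - g i))"
    by (rule prod_sum_PiE) (use fin in auto)
  also have "\<dots> = (\<Sum>c\<in>{c. \<forall>i. c$i \<in> T i} \<inter> rect a b. \<Prod>i\<in>UNIV. \<phi> i (nxt (T i) (c$i) - c$i))"
    by (rule sum.reindex_bij_witness[of _ vec_nth vec_lambda]) (auto simp: rect_def)
  finally show ?thesis .
qed

lemma partition_cells:
  fixes w :: "real^'n \<Rightarrow> real"
  assumes P: "rect_partition P R" and G: "finite G"
  shows "(\<Sum>K\<in>P. \<Sum>c\<in>G \<inter> K. w c) = (\<Sum>c\<in>G \<inter> R. w c)"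
proof -
  have finP: "finite P" and U: "\<Union>P = R" and dis: "\<forall>K\<in>P. \<forall>L\<in>P. K \<noteq> L \<longrightarrow> K \<inter> L = {}"
    using P unfolding rect_partition_def by auto
  have "G \<inter> R = (\<Union>K\<in>P. G \<inter> K)" using U by auto
  moreover have "sum w (\<Union>K\<in>P. G \<inter> K) = (\<Sum>K\<in>P. sum w (G \<inter> K))"
    by (rule sum.UNION_disjoint) (use finP G dis in auto)
  ultimately have "(\<Sum>c\<in>G \<inter> R. w c) = (\<Sum>K\<in>P. \<Sum>c\<in>G \<inter> K. w c)" by simp
  then show ?thesis by simp
qed

lemma invariance:
  fixes \<phi> :: "'n::finite \<Rightarrow> real \<Rightarrow> real"
  assumes add: "\<And>i x y. \<phi> i (x+y) = \<phi> i x + \<phi> i y"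
    and P: "rect_partition P R" and P': "rect_partition P' R"
  shows "(\<Sum>K\<in>P. \<Prod>i\<in>UNIV. \<phi> i (measure lborel (pr i K))) =
         (\<Sum>K\<in>P'. \<Prod>i\<in>UNIV. \<phi> i (measure lborel (pr i K)))"
proof -
  let ?Q = "P \<union> P'"
  have finQ: "finite ?Q" using P P' unfolding rect_partition_def by auto
  have "\<forall>K\<in>?Q. \<exists>ab. (\<forall>i. fst ab$i < snd ab$i) \<and> K = rect (fst ab) (snd ab)"
  proof
    fix K assume "K \<in> ?Q"
    then have "is_rectangle K" using P P' unfolding rect_partition_def by auto
    then obtain a b where "\<forall>i. a$i < b$i" "K = rect a b" unfolding is_rectangle_def by blast
    then show "\<exists>ab. (\<forall>i. fst ab$i < snd ab$i) \<and> K = rect (fst ab) (snd ab)"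
      by (intro exI[of _ "(a,b)"]) simp
  qed
  from bchoice[OF this] obtain ab where ab: "\<forall>K\<in>?Q. (\<forall>i. fst (ab K)$i < snd (ab K)$i) \<and> K = rect (fst (ab K)) (snd (ab K))"
    by blast
  define T where "T i = (\<lambda>K. fst (ab K) $ i) ` ?Q \<union> (\<lambda>K. snd (ab K) $ i) ` ?Q" for i
  have finT: "\<And>i. finite (T i)" unfolding T_def using finQ by auto
  define G where "G = {c::real^'n. \<forall>i. c$i \<in> T i}"
  have finG: "finite G" unfolding G_def by (rule finite_grid[OF finT])
  define w where "w c = (\<Prod>i\<in>UNIV. \<phi> i (nxt (T i) (c$i) - c$i))" for c :: "real^'n"
  have key: "(\<Prod>i\<in>UNIV. \<phi> i (measure lborel (pr i K))) = (\<Sum>c\<in>G \<inter> K. w c)" if K: "K \<in> ?Q" for K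
  proof -
    define a where "a = fst (ab K)"
    define b where "b = snd (ab K)"
    have lt: "\<forall>i. a$i < b$i" and Kab: "K = rect a b" using ab K unfolding a_def b_def by auto
    have aT: "\<And>i. a$i \<in> T i" and bT: "\<And>i. b$i \<in> T i" unfolding T_def a_def b_def using K by auto
    have "(\<Prod>i\<in>UNIV. \<phi> i (measure lborel (pr i K))) = (\<Prod>i\<in>UNIV. \<phi> i (b$i - a$i))"
      unfolding Kab using measure_pr_rect[OF lt] by simp
    also have "\<dots> = (\<Sum>c\<in>G \<inter> K. w c)"
      unfolding Kab G_def w_def by (rule rect_cells[OF add finT lt aT bT])
    finally show ?thesis .
  qed
  have "(\<Sum>K\<in>P. \<Prod>i\<in>UNIV. \<phi> i (measure lborel (pr i K))) = (\<Sum>K\<in>P. \<Sum>c\<in>G \<inter> K. w c)"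
    using key by (intro sum.cong) auto
  also have "\<dots> = (\<Sum>c\<in>G \<inter> R. w c)" by (rule partition_cells[OF P finG])
  also have "\<dots> = (\<Sum>K\<in>P'. \<Sum>c\<in>G \<inter> K. w c)" by (rule partition_cells[OF P' finG, symmetric])
  also have "\<dots> = (\<Sum>K\<in>P'. \<Prod>i\<in>UNIV. \<phi> i (measure lborel (pr i K)))"
    using key by (intro sum.cong) auto
  finally show ?thesis .
qed

lemma fiber_bij:
  assumes "finite A" "finite B" "\<And>s. card {a\<in>A. f a = s} = card {b\<in>B. f b = s}"
  shows "\<exists>g. bij_betw g A B \<and> (\<forall>a\<in>A. f (g a) = f a)"
proof -
  have "\<forall>s. \<exists>h. bij_betw h {a\<in>A. f a = s} {b\<in>B. f b = s}"
    using assms by (metis (no_types, lifting) finite_same_card_bij finite_subset mem_Collect_eq subsetI)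
  then obtain H where H: "\<And>s. bij_betw (H s) {a\<in>A. f a = s} {b\<in>B. f b = s}" by metis
  define g where "g a = H (f a) a" for a
  have gf: "g a \<in> B \<and> f (g a) = f a" if "a \<in> A" for a
    using H[of "f a"] that unfolding g_def bij_betw_def by auto
  have "inj_on g A"
  proof
    fix a a' assume a: "a \<in> A" and a': "a' \<in> A" and eq: "g a = g a'"
    have "f a = f a'" using gf[OF a] gf[OF a'] eq by metis
    then have "H (f a) a = H (f a) a'" using eq unfolding g_def by simp
    moreover have "inj_on (H (f a)) {x\<in>A. f x = f a}" using H unfolding bij_betw_def by blast
    ultimately show "a = a'" using a a' \<open>f a = f a'\<close> unfolding inj_on_def by auto
  qed
  moreover have "g ` A = B"
  proof
    show "g ` A \<subseteq> B" using gf by auto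
    show "B \<subseteq> g ` A"
    proof
      fix b assume b: "b \<in> B"
      then have "b \<in> H (f b) ` {a\<in>A. f a = f b}" using H[of "f b"] unfolding bij_betw_def by auto
      then obtain a where "a \<in> A" "f a = f b" "H (f b) a = b" by auto
      then show "b \<in> g ` A" unfolding g_def by force
    qed
  qed
  ultimately show ?thesis using gf unfolding bij_betw_def by auto
qed

lemma translate_rect:
  assumes "is_rectangle K" "is_rectangle L"
    and "\<And>i. measure lborel (pr i K) = measure lborel (pr i L)"
  shows "\<exists>v. L = (\<lambda>x. x + v) ` K"
proof -
  obtain a b where ab: "\<forall>i. a$i < b$i" "K = rect a b" using assms(1) unfolding is_rectangle_def by auto
  obtain a' b' where ab': "\<forall>i. a'$i < b'$i" "L = rect a' b'" using assms(2) unfolding is_rectangle_def by auto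
  have eq: "\<And>i. b$i - a$i = b'$i - a'$i" using assms(3) measure_pr_rect[OF ab(1)] measure_pr_rect[OF ab'(1)]
    ab(2) ab'(2) by metis
  show ?thesis
  proof (intro exI[of _ "a' - a"] set_eqI iffI)
    fix x assume "x \<in> L"
    then have "x - (a' - a) \<in> K" using ab ab' eq unfolding rect_def by (auto simp: algebra_simps)
    then show "x \<in> (\<lambda>x. x + (a' - a)) ` K" by (rule rev_image_eqI) simp
  next
    fix x assume "x \<in> (\<lambda>x. x + (a' - a)) ` K"
    then obtain y where "y \<in> K" "x = y + (a' - a)" by auto
    then have yi: "\<forall>i. a$i \<le> y$i \<and> y$i < b$i" and xi: "\<forall>i. x$i = y$i + (a'$i - a$i)"
      using ab(2) unfolding rect_def by auto
    show "x \<in> L" unfolding ab'(2) rect_def mem_Collect_eq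
    proof
      fix i
      from yi[rule_format, of i] xi[rule_format, of i] eq[of i]
      show "a'$i \<le> x$i \<and> x$i < b'$i" by linarith
    qed
  qed
qed

definition qs :: "rat \<Rightarrow> real \<Rightarrow> real" where "qs q x = of_rat q * x"

lemma vs_qs: "vector_space qs"
  unfolding vector_space_def qs_def by (simp add: algebra_simps of_rat_add of_rat_mult)

lemma vsp_qs: "vector_space_pair qs qs"
  unfolding vector_space_pair_def using vs_qs by simp


lemma hamel_fun:
  assumes "rat_lin_indep F" "f \<in> F"
  shows "\<exists>\<phi>::real\<Rightarrow>real. (\<forall>x y. \<phi> (x+y) = \<phi> x + \<phi> y) \<and> \<phi> f = 1 \<and> (\<forall>g\<in>F. g \<noteq> f \<longrightarrow> \<phi> g = 0)"
proof -
  have ind: "\<not> module.dependent qs F"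
  proof
    assume "module.dependent qs F"
    then obtain t u where t: "finite t" "t \<subseteq> F" "(\<Sum>v\<in>t. qs (u v) v) = 0" "\<exists>v\<in>t. u v \<noteq> 0"
      unfolding module.dependent_explicit[OF vs_qs[folded module_iff_vector_space]] by blast
    have h1: "\<forall>s\<in>t. real_of_rat (u s) \<in> \<rat>" by (simp add: Rats_of_rat)
    have h2: "(\<Sum>s\<in>t. real_of_rat (u s) * s) = 0" using t(3) unfolding qs_def .
    have "\<forall>s\<in>t. (\<lambda>s. real_of_rat (u s)) s = (0::real)"
      using assms(1)[unfolded rat_lin_indep_def, rule_format, of t "\<lambda>s. real_of_rat (u s)"] t(1,2) h1 h2
      by blast
    with t(4) show False by auto
  qed
  define \<phi> where "\<phi> = vector_space_pair.construct qs qs F (\<lambda>g. if g = f then 1 else 0)"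
  have lin: "Vector_Spaces.linear qs qs \<phi>"
    unfolding \<phi>_def by (rule vector_space_pair.linear_construct[OF vsp_qs ind])
  have a: "\<forall>x y. \<phi> (x+y) = \<phi> x + \<phi> y" using vector_space_pair.linear_add[OF vsp_qs lin] by blast
  have b: "\<And>g. g \<in> F \<Longrightarrow> \<phi> g = (if g = f then 1 else 0)"
    unfolding \<phi>_def by (rule vector_space_pair.construct_basis[OF vsp_qs ind])
  show ?thesis
    apply (rule exI[of _ \<phi>])
    using a b assms(2) by simp
qed

schematic_goal mainTheorem16:
  fixes R :: "(real^'n) set"
    and F :: "'n \<Rightarrow> real set"
    and P P' :: "(real^'n) set set"
  assumes "is_multirectangle R"
    and "\<And>i. F i \<subseteq> {0<..}"
    and "\<And>i. rat_lin_indep (F i)"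
    and "rect_partition P R"
    and "rect_partition P' R"
    and "\<And>K i. K \<in> P \<union> P' \<Longrightarrow> measure lborel (pr i K) \<in> F i"
  shows "\<exists>\<delta>. bij_betw \<delta> P P' \<and> (\<forall>K\<in>P. \<exists>v. \<delta> K = (\<lambda>x. x + v) ` K) \<and>
             (\<forall>K\<in>P \<inter> P'. \<delta> K = K)"
proof -
  define shp where "shp K = (\<lambda>i. measure lborel (pr i K))" for K :: "(real^'n) set"
  have finP: "finite P" and finP': "finite P'" using assms(4,5) unfolding rect_partition_def by auto
  have recP: "\<And>K. K \<in> P \<union> P' \<Longrightarrow> is_rectangle K" using assms(4,5) unfolding rect_partition_def by auto
  have cnt: "card {K\<in>P. shp K = s} = card {K\<in>P'. shp K = s}" for s
  proof (cases "\<forall>i. s i \<in> F i")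
    case True
    have "\<forall>i. \<exists>\<phi>::real\<Rightarrow>real. (\<forall>x y. \<phi> (x+y) = \<phi> x + \<phi> y) \<and> \<phi> (s i) = 1 \<and> (\<forall>g\<in>F i. g \<noteq> s i \<longrightarrow> \<phi> g = 0)"
    proof
      fix i
      from True have "s i \<in> F i" by blast
      then show "\<exists>\<phi>::real\<Rightarrow>real. (\<forall>x y. \<phi> (x+y) = \<phi> x + \<phi> y) \<and> \<phi> (s i) = 1 \<and> (\<forall>g\<in>F i. g \<noteq> s i \<longrightarrow> \<phi> g = 0)"
        using hamel_fun[of "F i" "s i"] assms(3)[of i] by blast
    qed
    then obtain \<Phi> :: "'n \<Rightarrow> real \<Rightarrow> real" where \<Phi>0: "\<forall>i. (\<forall>x y. \<Phi> i (x+y) = \<Phi> i x + \<Phi> i y) \<and> \<Phi> i (s i) = 1 \<and>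
        (\<forall>g\<in>F i. g \<noteq> s i \<longrightarrow> \<Phi> i g = 0)" by (rule choice[THEN exE]) blast
    have \<Phi>: "\<And>i. (\<forall>x y. \<Phi> i (x+y) = \<Phi> i x + \<Phi> i y) \<and> \<Phi> i (s i) = 1 \<and>
        (\<forall>g\<in>F i. g \<noteq> s i \<longrightarrow> \<Phi> i g = 0)" using \<Phi>0 by blast
    have add: "\<And>i x y. \<Phi> i (x+y) = \<Phi> i x + \<Phi> i y" using \<Phi> by blast
    have ind: "(\<Prod>i\<in>UNIV. \<Phi> i (measure lborel (pr i K))) = (if shp K = s then 1 else 0)"
      if K: "K \<in> P \<union> P'" for K
    proof (cases "shp K = s")
      case True
      then have "\<forall>i. measure lborel (pr i K) = s i" unfolding shp_def by auto
      then have "\<Phi> i (measure lborel (pr i K)) = 1" for i using \<Phi>[of i] by simp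
      then show ?thesis using True by simp
    next
      case False
      then obtain i where i: "measure lborel (pr i K) \<noteq> s i" unfolding shp_def by auto
      then have "\<Phi> i (measure lborel (pr i K)) = 0" using \<Phi> assms(6)[OF K] by blast
      then have ex: "\<exists>j\<in>UNIV. \<Phi> j (measure lborel (pr j K)) = 0" by blast
      have "(\<Prod>i\<in>UNIV. \<Phi> i (measure lborel (pr i K))) = 0"
        by (rule prod_zero[OF finite_class.finite_UNIV ex])
      then show ?thesis using False by simp
    qed
    have cP: "real (card {K\<in>Q. shp K = s}) = (\<Sum>K\<in>Q. \<Prod>i\<in>UNIV. \<Phi> i (measure lborel (pr i K)))"
      if "Q \<subseteq> P \<union> P'" "finite Q" for Q
    proof -
      have "real (card {K\<in>Q. shp K = s}) = (\<Sum>K\<in>{K\<in>Q. shp K = s}. 1)" by simp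
      also have "\<dots> = (\<Sum>K\<in>Q. if shp K = s then 1 else 0)" using that(2) by (rule sum.inter_filter)
      also have "\<dots> = (\<Sum>K\<in>Q. \<Prod>i\<in>UNIV. \<Phi> i (measure lborel (pr i K)))"
        by (rule sum.cong[OF refl], rule ind[symmetric]) (use that(1) in blast)
      finally show ?thesis .
    qed
    have "real (card {K\<in>P. shp K = s}) = real (card {K\<in>P'. shp K = s})"
      using cP[of P] cP[of P'] finP finP' invariance[of \<Phi>, OF add assms(4) assms(5)] by auto
    then show ?thesis by simp
  next
    case False
    then obtain i where i: "s i \<notin> F i" by auto
    have "{K\<in>Q. shp K = s} = {}" if "Q \<subseteq> P \<union> P'" for Q
    proof (rule ccontr)
      assume "{K\<in>Q. shp K = s} \<noteq> {}"
      then obtain K where K: "K \<in> Q" "shp K = s" by auto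
      then have "measure lborel (pr i K) \<in> F i" using assms(6) that by blast
      moreover have "measure lborel (pr i K) = s i" using K(2) unfolding shp_def by auto
      ultimately show False using i by simp
    qed
    then have "{K\<in>P. shp K = s} = {}" "{K\<in>P'. shp K = s} = {}" by blast+
    then show ?thesis by (simp only: card.empty)
  qed
  have cntAB: "card {K\<in>P-P'. shp K = s} = card {K\<in>P'-P. shp K = s}" for s
  proof -
    have e1: "{K\<in>P-P'. shp K = s} = {K\<in>P. shp K = s} - {K\<in>P\<inter>P'. shp K = s}" by auto
    have e2: "{K\<in>P'-P. shp K = s} = {K\<in>P'. shp K = s} - {K\<in>P\<inter>P'. shp K = s}" by auto
    have c1: "card ({K\<in>P. shp K = s} - {K\<in>P\<inter>P'. shp K = s}) = card {K\<in>P. shp K = s} - card {K\<in>P\<inter>P'. shp K = s}"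
      by (rule card_Diff_subset) (use finP in auto)
    have c2: "card ({K\<in>P'. shp K = s} - {K\<in>P\<inter>P'. shp K = s}) = card {K\<in>P'. shp K = s} - card {K\<in>P\<inter>P'. shp K = s}"
      by (rule card_Diff_subset) (use finP in auto)
    show ?thesis unfolding e1 e2 c1 c2 cnt[of s] ..
  qed
  obtain g where g: "bij_betw g (P-P') (P'-P)" "\<And>K. K \<in> P-P' \<Longrightarrow> shp (g K) = shp K"
    using fiber_bij[of "P-P'" "P'-P" shp] finP finP' cntAB by auto
  define \<delta> where "\<delta> K = (if K \<in> P' then K else g K)" for K
  have b1: "bij_betw \<delta> (P\<inter>P') (P\<inter>P')"
    using bij_betw_cong[of "P\<inter>P'" \<delta> id "P\<inter>P'"] unfolding \<delta>_def by auto
  have b2: "bij_betw \<delta> (P-P') (P'-P)"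
    using bij_betw_cong[of "P-P'" \<delta> g "P'-P"] g(1) unfolding \<delta>_def by auto
  have "bij_betw \<delta> ((P\<inter>P') \<union> (P-P')) ((P\<inter>P') \<union> (P'-P))"
    by (rule bij_betw_combine[OF b1 b2]) auto
  moreover have "(P\<inter>P') \<union> (P-P') = P" "(P\<inter>P') \<union> (P'-P) = P'" by auto
  ultimately have bij: "bij_betw \<delta> P P'" by simp
  have tr: "\<exists>v. \<delta> K = (\<lambda>x. x + v) ` K" if K: "K \<in> P" for K
  proof (cases "K \<in> P'")
    case True
    then show ?thesis unfolding \<delta>_def by (intro exI[of _ 0]) simp
  next
    case False
    then have KA: "K \<in> P - P'" using K by simp
    then have gK: "g K \<in> P' - P" using g(1) unfolding bij_betw_def by auto
    have "shp (g K) i = shp K i" for i using g(2)[OF KA] by simp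
    then have "\<And>i. measure lborel (pr i K) = measure lborel (pr i (g K))"
      unfolding shp_def by simp
    then have "\<exists>v. g K = (\<lambda>x. x + v) ` K"
      using translate_rect recP K gK by blast
    then show ?thesis unfolding \<delta>_def using False by simp
  qed
  show ?thesis using bij tr unfolding \<delta>_def by auto
qed

end
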